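(* For all $s,t\in\mathbb{R}$ and $b\ge 0$, $\mathcal{T}_c(\gamma_{s,0},\gamma_{t,b})\le 2\,(|s-t|+e^b-1)$.
   Context: For $t,a\in\mathbb{R}$, $\gamma_{t,a}$ denotes the Gaussian probability measure on $\mathbb{R}$ with mean $t$ and variance $e^{2a}$. For probability measures $\mu,\nu$ on $\mathbb{R}$, $\mathcal{T}_c(\mu,\nu)=\inf_\Pi\int(|x-y|+1_{x\ne y})\,d\Pi(x,y)$, the infimum over all probability measures $\Pi$ on $\mathbb{R}^2$ with first marginal $\mu$ and second marginal $\nu$. *)

theory Defs
  imports "HOL-Probability.Probability"
begin

definition gauss :: "real \<Rightarrow> real \<Rightarrow> real measure" where
  "gauss t a = density lborel (normal_density t (exp a))"

definition couplings :: "real measure \<Rightarrow> real measure \<Rightarrow> (real \<times> real) measure set" where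
  "couplings \<mu> \<nu> = {P. prob_space P \<and> sets P = sets (borel :: (real \<times> real) measure) \<and>
      distr P borel fst = \<mu> \<and> distr P borel snd = \<nu>}"

definition Tc :: "real measure \<Rightarrow> real measure \<Rightarrow> ennreal" where
  "Tc \<mu> \<nu> = (INF P\<in>couplings \<mu> \<nu>.
      \<integral>\<^sup>+ p. ennreal (\<bar>fst p - snd p\<bar> + (if fst p \<noteq> snd p then 1 else 0)) \<partial>P)"

end

theory Submission
  imports Defs
begin


abbreviation "p0 \<equiv> 1 / sqrt (2 * pi)"

lemma phi_le: "std_normal_density z \<le> p0"
  unfolding std_normal_density_def by (simp add: divide_le_cancel)

lemma sqrt_2pi: "sqrt (2 / pi) = 2 * p0"
proof -
  have "sqrt (2/pi) = sqrt 2 / sqrt pi" by (simp add: real_sqrt_divide)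
  also have "\<dots> = 2 / (sqrt 2 * sqrt pi)"
    by (simp add: field_simps)
  finally show ?thesis by (simp add: real_sqrt_mult)
qed

lemma m0: "has_bochner_integral lborel (\<lambda>x. std_normal_density x) 1"
  using std_normal_moment_even[of 0] by simp
lemma m2: "has_bochner_integral lborel (\<lambda>x. std_normal_density x * x\<^sup>2) 1"
  using std_normal_moment_even[of 1] by (simp add: fact_numeral)
lemma m1: "has_bochner_integral lborel (\<lambda>x. std_normal_density x * \<bar>x\<bar>) (2 * p0)"
  using std_normal_moment_abs_odd[of 0] by (simp add: sqrt_2pi)
lemma m3: "has_bochner_integral lborel (\<lambda>x. std_normal_density x * \<bar>x\<bar>^3) (4 * p0)"
  using std_normal_moment_abs_odd[of 1] by (simp add: sqrt_2pi)

lemma poly1: "has_bochner_integral lborel (\<lambda>x::real. (1 - x\<^sup>2) * indicator {-1..1} x) (4/3)"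
proof -
  have "has_bochner_integral lborel (\<lambda>x. (1 - x\<^sup>2) * indicator {-1..1} x) ((\<lambda>x::real. x - x^3/3) 1 - (\<lambda>x::real. x - x^3/3) (-1))"
    by (rule has_bochner_integral_FTC_Icc_real) (auto intro!: derivative_eq_intros simp: power2_eq_square)
  then show ?thesis by simp
qed

lemma poly2: "has_bochner_integral lborel (\<lambda>x::real. (x - x^3) * indicator {0..1} x) (1/4)"
proof -
  have "has_bochner_integral lborel (\<lambda>x. (x - x^3) * indicator {0..1} x) ((\<lambda>x::real. x\<^sup>2/2 - x^4/4) 1 - (\<lambda>x::real. x\<^sup>2/2 - x^4/4) 0)"
    by (rule has_bochner_integral_FTC_Icc_real) (auto intro!: derivative_eq_intros simp: power2_eq_square)
  then show ?thesis by simp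
qed

lemma poly3: "has_bochner_integral lborel (\<lambda>x::real. (x^3 - x) * indicator {-1..0} x) (1/4)"
proof -
  have "has_bochner_integral lborel (\<lambda>x. (x^3 - x) * indicator {-1..0} x) ((\<lambda>x::real. x^4/4 - x\<^sup>2/2) 0 - (\<lambda>x::real. x^4/4 - x\<^sup>2/2) (-1))"
    by (rule has_bochner_integral_FTC_Icc_real) (auto intro!: derivative_eq_intros simp: power2_eq_square)
  then show ?thesis by simp
qed

lemma phi_nonneg: "0 \<le> std_normal_density z" by simp

lemma pw1: "std_normal_density z * \<bar>z\<^sup>2 - 1\<bar> \<le> std_normal_density z * z\<^sup>2 - std_normal_density z + 2 * p0 * ((1 - z\<^sup>2) * indicator {-1..1} z)"
proof (cases "\<bar>z\<bar> \<le> 1")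
  case True
  then have z: "z\<^sup>2 \<le> 1" "z \<in> {-1..1}" by (auto simp: abs_le_iff abs_square_le_1)
  have *: "std_normal_density z * (1 - z\<^sup>2) \<le> p0 * (1 - z\<^sup>2)"
    using z phi_le[of z] by (intro mult_right_mono) auto
  have e1: "std_normal_density z * \<bar>z\<^sup>2 - 1\<bar> = std_normal_density z * (1 - z\<^sup>2)" using z by simp
  have e2: "std_normal_density z * z\<^sup>2 - std_normal_density z + 2 * p0 * ((1 - z\<^sup>2) * indicator {-1..1} z)
     = - (std_normal_density z * (1 - z\<^sup>2)) + 2 * (p0 * (1 - z\<^sup>2))" using z by (simp add: algebra_simps)
  show ?thesis unfolding e1 e2 using * by linarith
next
  case False
  then have z: "1 < z\<^sup>2" "z \<notin> {-1..1}" using abs_square_le_1[of z] by (auto simp: abs_le_iff)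
  then show ?thesis by (simp add: algebra_simps)
qed

lemma pw2: "std_normal_density z * \<bar>z\<bar> * \<bar>z\<^sup>2 - 1\<bar> \<le> std_normal_density z * \<bar>z\<bar>^3 - std_normal_density z * \<bar>z\<bar>
   + 2 * p0 * ((z - z^3) * indicator {0..1} z + (z^3 - z) * indicator {-1..0} z)"
proof (cases "\<bar>z\<bar> \<le> 1")
  case True
  then have z: "z\<^sup>2 \<le> 1" by (auto simp: abs_square_le_1)
  have *: "std_normal_density z * (\<bar>z\<bar> * (1 - z\<^sup>2)) \<le> p0 * (\<bar>z\<bar> * (1 - z\<^sup>2))"
    using z phi_le[of z] by (intro mult_right_mono) auto
  have e: "\<bar>z\<bar>^3 = \<bar>z\<bar> * z\<^sup>2" by (simp add: power2_eq_square power3_eq_cube abs_mult)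
  have K: "(z - z^3) * indicator {0..1} z + (z^3 - z) * indicator {-1..0} z = \<bar>z\<bar> * (1 - z\<^sup>2)"
  proof (cases "z \<ge> 0")
    case True
    then show ?thesis
      using \<open>\<bar>z\<bar> \<le> 1\<close> by (cases "z = 0") (auto simp: indicator_def power2_eq_square power3_eq_cube algebra_simps)
  next
    case False
    then show ?thesis
      using \<open>\<bar>z\<bar> \<le> 1\<close> by (auto simp: indicator_def power2_eq_square power3_eq_cube algebra_simps)
  qed
  have e1: "std_normal_density z * \<bar>z\<bar> * \<bar>z\<^sup>2 - 1\<bar> = std_normal_density z * (\<bar>z\<bar> * (1 - z\<^sup>2))" using z by simp
  have e2: "std_normal_density z * \<bar>z\<bar>^3 - std_normal_density z * \<bar>z\<bar> = - (std_normal_density z * (\<bar>z\<bar> * (1 - z\<^sup>2)))"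
    unfolding e by (simp add: algebra_simps)
  show ?thesis unfolding e1 e2 K using * by linarith
next
  case False
  then have z: "1 < z\<^sup>2" "z \<notin> {0..1}" "z \<notin> {-1..0}" using abs_square_le_1[of z] by (auto simp: abs_le_iff)
  have e: "\<bar>z\<bar>^3 = \<bar>z\<bar> * z\<^sup>2" by (simp add: power2_eq_square power3_eq_cube abs_mult)
  show ?thesis using z e by (simp add: algebra_simps)
qed

lemma Qint:
  fixes a d y :: real
  assumes a: "0 \<le> a" and d: "0 \<le> d" and y: "0 \<le> y"
  shows "(\<integral>\<^sup>+z. ennreal ((a + \<bar>z\<bar>) * std_normal_density z * (\<bar>z\<bar> * d + \<bar>z\<^sup>2 - 1\<bar> * y)) \<partial>lborel)
     \<le> ennreal (a*d*(2*p0) + d + y*(a*(8/3*p0) + 3*p0))"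
proof -
  let ?f = "std_normal_density"
  define U where "U z = a*d*(?f z*\<bar>z\<bar>) + d*(?f z * z\<^sup>2) + y*(a*(?f z * z\<^sup>2 - ?f z + 2*p0*((1-z\<^sup>2)*indicator {-1..1} z))
      + (?f z*\<bar>z\<bar>^3 - ?f z*\<bar>z\<bar> + 2*p0*((z-z^3)*indicator {0..1} z + (z^3-z)*indicator {-1..0} z)))" for z :: real
  have hb: "has_bochner_integral lborel U (a*d*(2*p0) + d*1 + y*(a*(1 - 1 + 2*p0*(4/3)) + (4*p0 - 2*p0 + 2*p0*(1/4+1/4))))"
    unfolding U_def
    by (intro has_bochner_integral_add has_bochner_integral_diff has_bochner_integral_mult_right m0 m1 m2 m3 poly1 poly2 poly3)
  have V: "a*d*(2*p0) + d*1 + y*(a*(1 - 1 + 2*p0*(4/3)) + (4*p0 - 2*p0 + 2*p0*(1/4+1/4))) = a*d*(2*p0) + d + y*(a*(8/3*p0) + 3*p0)"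
    by (simp add: algebra_simps)
  have pw: "(a + \<bar>z\<bar>) * ?f z * (\<bar>z\<bar> * d + \<bar>z\<^sup>2 - 1\<bar> * y) \<le> U z" for z
  proof -
    have "(a + \<bar>z\<bar>) * ?f z * (\<bar>z\<bar> * d + \<bar>z\<^sup>2 - 1\<bar> * y) =
       a*d*(?f z*\<bar>z\<bar>) + d*(?f z * z\<^sup>2) + y*(a*(?f z * \<bar>z\<^sup>2 - 1\<bar>) + ?f z * \<bar>z\<bar> * \<bar>z\<^sup>2 - 1\<bar>)"
      by (simp add: algebra_simps power2_eq_square abs_mult_self_eq)
    also have "\<dots> \<le> U z" unfolding U_def
      using pw1[of z] pw2[of z] a y
      by (intro add_mono order_refl mult_left_mono) auto
    finally show ?thesis .
  qed
  have "(\<integral>\<^sup>+z. ennreal ((a + \<bar>z\<bar>) * ?f z * (\<bar>z\<bar> * d + \<bar>z\<^sup>2 - 1\<bar> * y)) \<partial>lborel) \<le> (\<integral>\<^sup>+z. ennreal (U z) \<partial>lborel)"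
    using pw by (intro nn_integral_mono) (simp add: ennreal_leI)
  also have "\<dots> = ennreal (integral\<^sup>L lborel U)"
  proof (rule nn_integral_eq_integral)
    show "integrable lborel U" using hb by (rule integrable.intros)
    show "AE x in lborel. 0 \<le> U x"
    proof (intro AE_I2)
      fix x
      have "0 \<le> (a + \<bar>x\<bar>) * ?f x * (\<bar>x\<bar> * d + \<bar>x\<^sup>2 - 1\<bar> * y)" using a d y by simp
      then show "0 \<le> U x" using pw[of x] by linarith
    qed
  qed
  also have "integral\<^sup>L lborel U = a*d*(2*p0) + d + y*(a*(8/3*p0) + 3*p0)"
    using has_bochner_integral_integral_eq[OF hb] V by simp
  finally show ?thesis .
qed



lemma normal_density_alt:
  assumes "0 < S"
  shows "normal_density m S x = std_normal_density ((x - m) / S) / S"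
proof -
  have "sqrt (2 * pi * S\<^sup>2) = sqrt (2*pi) * S" using assms by (simp add: real_sqrt_mult)
  moreover have "(x - m)\<^sup>2 / (2 * S\<^sup>2) = ((x - m) / S)\<^sup>2 / 2" using assms by (simp add: power_divide)
  ultimately show ?thesis unfolding normal_density_def by (simp add: field_simps)
qed

definition Dd :: "real \<Rightarrow> real \<Rightarrow> real \<Rightarrow> real \<Rightarrow> real \<Rightarrow> real" where
  "Dd s t \<sigma> u x = (let S = 1 + u*(\<sigma>-1); z = (x - (s + u*(t-s))) / S in
     std_normal_density z / S\<^sup>2 * (z * (t - s) + (z\<^sup>2 - 1) * (\<sigma> - 1)))"

lemma alg_deriv:
  fixes X S E1 E2 c s t \<sigma> :: real
  assumes "S \<noteq> 0" "c \<noteq> 0" "E1 = E2"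
  shows "(- (E1 * (((s - t) * S - X * (\<sigma> - 1)) * (X * c)) / (S * S)) - E1 * ((\<sigma> - 1) * c)) / (c * S * (c * S))
    = 1 / c * E2 / S\<^sup>2 * (X / S * (t - s) + ((X / S)\<^sup>2 - 1) * (\<sigma> - 1))"
  using assms by (simp add: field_simps power2_eq_square)

lemma deriv_E:
  fixes s t \<sigma> x u :: real
  assumes S: "0 < 1 + u*(\<sigma>-1)"
  shows "((\<lambda>u. exp (- ((x - (s + u*(t-s))) / (1 + u*(\<sigma>-1)))\<^sup>2 / 2) / (sqrt (2*pi) * (1 + u*(\<sigma>-1))))
     has_real_derivative Dd s t \<sigma> u x) (at u)"
proof -
  define S where "S = 1 + u*(\<sigma>-1)"
  have S0: "S \<noteq> 0" using S S_def by simp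
  show ?thesis
    using S0 unfolding S_def
    apply (auto intro!: derivative_eq_intros)
    apply (simp only: Dd_def Let_def std_normal_density_def)
    apply (rule alg_deriv)
      apply simp_all
    done
qed



lemma deriv_G:
  fixes s t \<sigma> x u :: real
  assumes S: "0 < 1 + u*(\<sigma>-1)"
  shows "((\<lambda>u. normal_density (s + u*(t-s)) (1 + u*(\<sigma>-1)) x) has_real_derivative Dd s t \<sigma> u x) (at u)"
proof (rule has_field_derivative_transform_within_open[OF deriv_E[OF S]])
  show "open {u. 0 < 1 + u*(\<sigma>-1)}" by (intro open_Collect_less continuous_intros)
  show "u \<in> {u. 0 < 1 + u*(\<sigma>-1)}" using S by simp
  fix w assume "w \<in> {u. 0 < 1 + u*(\<sigma>-1)}"
  then have v: "0 < 1 + w*(\<sigma>-1)" by simp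
  show "exp (- ((x - (s + w*(t-s))) / (1 + w*(\<sigma>-1)))\<^sup>2 / 2) / (sqrt (2*pi) * (1 + w*(\<sigma>-1))) =
    normal_density (s + w*(t-s)) (1 + w*(\<sigma>-1)) x"
    by (simp add: normal_density_alt[OF v] std_normal_density_def)
qed

lemma cont_Dd:
  assumes S: "0 < 1 + u*(\<sigma>-1)"
  shows "isCont (\<lambda>u. Dd s t \<sigma> u x) u"
  unfolding Dd_def Let_def std_normal_density_def using S
  by (intro continuous_intros) auto

lemma FTC_G:
  assumes "1 \<le> \<sigma>"
  shows "has_bochner_integral lborel (\<lambda>u. Dd s t \<sigma> u x * indicator {0..1} u)
     (normal_density t \<sigma> x - normal_density s 1 x)"
proof -
  have pos: "0 < 1 + u*(\<sigma>-1)" if "0 \<le> u" for u :: real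
    using assms that by (simp add: add_pos_nonneg)
  have "has_bochner_integral lborel (\<lambda>u. Dd s t \<sigma> u x * indicator {0..1} u)
     ((\<lambda>u. normal_density (s + u*(t-s)) (1 + u*(\<sigma>-1)) x) 1 - (\<lambda>u. normal_density (s + u*(t-s)) (1 + u*(\<sigma>-1)) x) 0)"
    by (rule has_bochner_integral_FTC_Icc_real) (auto intro!: deriv_G cont_Dd pos)
  then show ?thesis by simp
qed

lemma pw_bound:
  assumes "1 \<le> \<sigma>"
  shows "ennreal \<bar>normal_density t \<sigma> x - normal_density s 1 x\<bar> \<le>
    (\<integral>\<^sup>+u. ennreal (\<bar>Dd s t \<sigma> u x\<bar> * indicator {0..1} u) \<partial>lborel)"
proof -
  note h = FTC_G[OF assms, of s t x]
  have i1: "integrable lborel (\<lambda>u. Dd s t \<sigma> u x * indicator {0..1} u)" using h by (rule integrable.intros)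
  have i2: "integrable lborel (\<lambda>u. \<bar>Dd s t \<sigma> u x\<bar> * indicator {0..1} u)"
    using integrable_abs[OF i1] by (simp add: abs_mult)
  have "\<bar>normal_density t \<sigma> x - normal_density s 1 x\<bar> = \<bar>\<integral>u. Dd s t \<sigma> u x * indicator {0..1} u \<partial>lborel\<bar>"
    using has_bochner_integral_integral_eq[OF h] by simp
  also have "\<dots> \<le> (\<integral>u. \<bar>Dd s t \<sigma> u x\<bar> * indicator {0..1} u \<partial>lborel)"
    by (rule integral_abs_bound_integral[OF i1 i2]) (simp add: abs_mult)
  finally have "ennreal \<bar>normal_density t \<sigma> x - normal_density s 1 x\<bar> \<le> ennreal (\<integral>u. \<bar>Dd s t \<sigma> u x\<bar> * indicator {0..1} u \<partial>lborel)"
    by (rule ennreal_leI)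
  also have "\<dots> = (\<integral>\<^sup>+u. ennreal (\<bar>Dd s t \<sigma> u x\<bar> * indicator {0..1} u) \<partial>lborel)"
    by (rule nn_integral_eq_integral[symmetric, OF i2]) auto
  finally show ?thesis .
qed

lemma Dd_measurable[measurable]: "(\<lambda>p. Dd s t \<sigma> (snd p) (fst p)) \<in> borel_measurable (lborel \<Otimes>\<^sub>M lborel)"
  unfolding Dd_def Let_def normal_density_def by measurable

lemma Dd_measurable2[measurable]: "(\<lambda>x. Dd s t \<sigma> u x) \<in> borel_measurable borel"
  unfolding Dd_def Let_def normal_density_def by measurable

lemma inner_bound:
  fixes s t \<sigma> u :: real
  assumes sg: "1 \<le> \<sigma>" and u: "0 \<le> u" "u \<le> 1"
  defines "d \<equiv> \<bar>s - t\<bar>"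
  defines "a \<equiv> 1/2 + (1-u)*d"
  shows "(\<integral>\<^sup>+x. ennreal ((1/2 + \<bar>x - t\<bar>) * \<bar>Dd s t \<sigma> u x\<bar>) \<partial>lborel)
    \<le> ennreal (a*d*(2*p0) + d + (\<sigma>-1)*(a*(8/3*p0) + 3*p0))"
proof -
  define S where "S = 1 + u*(\<sigma>-1)"
  define \<mu> where "\<mu> = s + u*(t-s)"
  have S1: "1 \<le> S" using sg u by (simp add: S_def)
  have S0: "S \<noteq> 0" "0 < S" using S1 by auto
  have d0: "0 \<le> d" and a0: "0 \<le> a" using u by (auto simp: d_def a_def)
  let ?h = "\<lambda>x. ennreal ((1/2 + \<bar>x - t\<bar>) * \<bar>Dd s t \<sigma> u x\<bar>)"
  let ?Q = "\<lambda>z. ennreal ((a + \<bar>z\<bar>) * std_normal_density z * (\<bar>z\<bar> * d + \<bar>z\<^sup>2 - 1\<bar> * (\<sigma>-1)))"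
  have pw: "S * ((1/2 + \<bar>\<mu> + S*z - t\<bar>) * \<bar>Dd s t \<sigma> u (\<mu> + S*z)\<bar>)
      \<le> (a + \<bar>z\<bar>) * std_normal_density z * (\<bar>z\<bar> * d + \<bar>z\<^sup>2 - 1\<bar> * (\<sigma>-1))" for z
  proof -
    let ?R = "\<bar>z\<bar> * d + \<bar>z\<^sup>2 - 1\<bar> * (\<sigma>-1)"
    let ?f = "std_normal_density z"
    have e: "Dd s t \<sigma> u (\<mu> + S*z) = ?f / S\<^sup>2 * (z*(t-s) + (z\<^sup>2-1)*(\<sigma>-1))"
      unfolding Dd_def Let_def S_def[symmetric] \<mu>_def[symmetric] using S0 by simp
    have R: "\<bar>z*(t-s) + (z\<^sup>2-1)*(\<sigma>-1)\<bar> \<le> ?R"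
      using sg by (auto simp: d_def abs_mult abs_minus_commute intro!: order_trans[OF abs_triangle_ineq])
    have D: "\<bar>Dd s t \<sigma> u (\<mu> + S*z)\<bar> \<le> ?f / S\<^sup>2 * ?R"
    proof -
      have "0 \<le> std_normal_density z / S\<^sup>2" by simp
      then show ?thesis unfolding e abs_mult using R by (simp only: abs_of_nonneg) (rule mult_left_mono)
    qed
    have W: "1/2 + \<bar>\<mu> + S*z - t\<bar> \<le> a + S*\<bar>z\<bar>"
    proof -
      have "\<mu> + S*z - t = (1-u)*(s-t) + S*z" by (simp add: \<mu>_def algebra_simps)
      moreover have "\<bar>(1-u)*(s-t) + S*z\<bar> \<le> (1-u)*d + S*\<bar>z\<bar>"
        using u S0 abs_triangle_ineq[of "(1-u)*(s-t)" "S*z"] by (simp add: d_def abs_mult)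
      ultimately have "\<bar>\<mu> + S*z - t\<bar> \<le> (1-u)*d + S*\<bar>z\<bar>" by simp
      then show ?thesis by (simp add: a_def)
    qed
    have "S * ((1/2 + \<bar>\<mu> + S*z - t\<bar>) * \<bar>Dd s t \<sigma> u (\<mu> + S*z)\<bar>) \<le> S * ((a + S*\<bar>z\<bar>) * (?f / S\<^sup>2 * ?R))"
      using W D S0 by (intro mult_left_mono mult_mono) auto
    also have "\<dots> = (a / S + \<bar>z\<bar>) * ?f * ?R"
      using S0 by (simp add: field_simps power2_eq_square)
    also have "\<dots> \<le> (a + \<bar>z\<bar>) * ?f * ?R"
    proof -
      have "a / S \<le> a" using S1 a0 by (simp add: divide_le_eq mult_le_cancel_left1 order_trans[OF _ mult_right_mono])
      then show ?thesis using sg d0 by (intro mult_right_mono) auto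
    qed
    finally show ?thesis .
  qed
  have "(\<integral>\<^sup>+x. ?h x \<partial>lborel) = ennreal \<bar>S\<bar> * (\<integral>\<^sup>+z. ?h (\<mu> + S*z) \<partial>lborel)"
    by (rule nn_integral_real_affine) (use S0 in auto)
  also have "\<dots> = (\<integral>\<^sup>+z. ennreal S * ?h (\<mu> + S*z) \<partial>lborel)"
    using S0 by (subst nn_integral_cmult) auto
  also have "\<dots> \<le> (\<integral>\<^sup>+z. ?Q z \<partial>lborel)"
  proof (intro nn_integral_mono)
    fix z
    show "ennreal S * ?h (\<mu> + S*z) \<le> ?Q z"
      using pw[of z] S0 by (simp add: ennreal_mult[symmetric] ennreal_leI)
  qed
  also have "\<dots> \<le> ennreal (a*d*(2*p0) + d + (\<sigma>-1)*(a*(8/3*p0) + 3*p0))"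
    using Qint[OF a0 d0, of "\<sigma>-1"] sg by simp
  finally show ?thesis .
qed



lemma Dd_measurable3[measurable]: "(\<lambda>u. Dd s t \<sigma> u x) \<in> borel_measurable borel"
  unfolding Dd_def Let_def normal_density_def by measurable

lemma W_bound:
  fixes s t \<sigma> :: real
  assumes sg: "1 \<le> \<sigma>"
  defines "d \<equiv> \<bar>s - t\<bar>"
  shows "(\<integral>\<^sup>+x. ennreal ((1/2 + \<bar>x - t\<bar>) * \<bar>normal_density t \<sigma> x - normal_density s 1 x\<bar>) \<partial>lborel)
    \<le> ennreal ((1/2 + d/2)*(2*p0*d + 8/3*p0*(\<sigma>-1)) + d + 3*p0*(\<sigma>-1))"
proof -
  define c where "c = p0"
  let ?w = "\<lambda>x::real. 1/2 + \<bar>x - t\<bar>"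
  let ?D = "\<lambda>u x. \<bar>Dd s t \<sigma> u x\<bar> * indicator {0..1} u"
  define B where "B u = (1/2 + (1-u)*d)*d*(2*c) + d + (\<sigma>-1)*((1/2 + (1-u)*d)*(8/3*c) + 3*c)" for u
  have d0: "0 \<le> d" by (simp add: d_def)
  have p0: "0 \<le> c" by (simp add: c_def)
  have "(\<integral>\<^sup>+x. ennreal (?w x * \<bar>normal_density t \<sigma> x - normal_density s 1 x\<bar>) \<partial>lborel)
      = (\<integral>\<^sup>+x. ennreal (?w x) * ennreal \<bar>normal_density t \<sigma> x - normal_density s 1 x\<bar> \<partial>lborel)"
    by (intro nn_integral_cong) (simp add: ennreal_mult)
  also have "\<dots> \<le> (\<integral>\<^sup>+x. ennreal (?w x) * (\<integral>\<^sup>+u. ennreal (?D u x) \<partial>lborel) \<partial>lborel)"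
    by (intro nn_integral_mono mult_left_mono pw_bound sg) auto
  also have "\<dots> = (\<integral>\<^sup>+x. (\<integral>\<^sup>+u. ennreal (?w x) * ennreal (?D u x) \<partial>lborel) \<partial>lborel)"
    by (intro nn_integral_cong nn_integral_cmult[symmetric]) measurable
  also have "\<dots> = (\<integral>\<^sup>+u. (\<integral>\<^sup>+x. ennreal (?w x) * ennreal (?D u x) \<partial>lborel) \<partial>lborel)"
    by (rule lborel_pair.Fubini'[symmetric]) measurable
  also have "\<dots> = (\<integral>\<^sup>+u. ennreal (indicator {0..1} u) * (\<integral>\<^sup>+x. ennreal (?w x * \<bar>Dd s t \<sigma> u x\<bar>) \<partial>lborel) \<partial>lborel)"
  proof (intro nn_integral_cong)
    fix u :: real
    have "(\<integral>\<^sup>+x. ennreal (?w x) * ennreal (?D u x) \<partial>lborel) = (\<integral>\<^sup>+x. ennreal (indicator {0..1} u) * ennreal (?w x * \<bar>Dd s t \<sigma> u x\<bar>) \<partial>lborel)"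
    proof (intro nn_integral_cong)
      fix x :: real
      have "ennreal (?w x) * ennreal (?D u x) = ennreal (?w x * ?D u x)" by (rule ennreal_mult[symmetric]) auto
      also have "?w x * ?D u x = indicator {0..1} u * (?w x * \<bar>Dd s t \<sigma> u x\<bar>)" by (simp add: mult_ac)
      also have "ennreal \<dots> = ennreal (indicator {0..1} u) * ennreal (?w x * \<bar>Dd s t \<sigma> u x\<bar>)" by (rule ennreal_mult) auto
      finally show "ennreal (?w x) * ennreal (?D u x) = ennreal (indicator {0..1} u) * ennreal (?w x * \<bar>Dd s t \<sigma> u x\<bar>)" .
    qed
    also have "\<dots> = ennreal (indicator {0..1} u) * (\<integral>\<^sup>+x. ennreal (?w x * \<bar>Dd s t \<sigma> u x\<bar>) \<partial>lborel)"
      by (rule nn_integral_cmult) measurable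
    finally show "(\<integral>\<^sup>+x. ennreal (?w x) * ennreal (?D u x) \<partial>lborel) = ennreal (indicator {0..1} u) * (\<integral>\<^sup>+x. ennreal (?w x * \<bar>Dd s t \<sigma> u x\<bar>) \<partial>lborel)" .
  qed
  also have "\<dots> \<le> (\<integral>\<^sup>+u. ennreal (B u) * indicator {0..1} u \<partial>lborel)"
  proof (intro nn_integral_mono)
    fix u :: real
    show "ennreal (indicator {0..1} u) * (\<integral>\<^sup>+x. ennreal (?w x * \<bar>Dd s t \<sigma> u x\<bar>) \<partial>lborel) \<le> ennreal (B u) * indicator {0..1} u"
    proof (cases "u \<in> {0..1}")
      case True
      then show ?thesis using inner_bound[OF sg, where s=s and t=t and u=u] by (simp add: B_def d_def c_def mult_ac)
    qed simp
  qed
  also have "\<dots> = ennreal ((\<lambda>u. (u/2 + (u - u\<^sup>2/2)*d)*d*(2*c) + d*u + (\<sigma>-1)*((u/2 + (u - u\<^sup>2/2)*d)*(8/3*c) + 3*c*u)) 1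
       - (\<lambda>u. (u/2 + (u - u\<^sup>2/2)*d)*d*(2*c) + d*u + (\<sigma>-1)*((u/2 + (u - u\<^sup>2/2)*d)*(8/3*c) + 3*c*u)) 0)"
  proof (rule nn_integral_FTC_Icc)
    show "B \<in> borel_measurable borel" unfolding B_def by measurable
    fix u :: real assume u: "u \<in> {0..1}"
    show "0 \<le> B u" unfolding B_def using u d0 sg p0 by (intro add_nonneg_nonneg mult_nonneg_nonneg) auto
    show "((\<lambda>u. (u/2 + (u - u\<^sup>2/2)*d)*d*(2*c) + d*u + (\<sigma>-1)*((u/2 + (u - u\<^sup>2/2)*d)*(8/3*c) + 3*c*u)) has_real_derivative B u) (at u)"
      unfolding B_def by (auto intro!: derivative_eq_intros simp: field_simps)
  qed simp
  also have "\<dots> = ennreal ((1/2 + d/2)*(2*c*d + 8/3*c*(\<sigma>-1)) + d + 3*c*(\<sigma>-1))"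
    by (simp add: algebra_simps power2_eq_square)
  finally show ?thesis unfolding c_def .
qed



definition costf :: "real \<times> real \<Rightarrow> ennreal" where
  "costf p = ennreal (\<bar>fst p - snd p\<bar> + (if fst p \<noteq> snd p then 1 else 0))"

lemma costf_measurable0: "costf \<in> borel_measurable (borel \<Otimes>\<^sub>M borel)"
  unfolding costf_def by measurable

lemma costf_measurable[measurable]: "costf \<in> borel_measurable borel"
  using costf_measurable0 by (simp add: borel_prod)

lemma fst_borel[measurable]: "fst \<in> borel_measurable (borel :: (real \<times> real) measure)"
  using measurable_fst[of "borel :: real measure" "borel :: real measure"] by (simp add: borel_prod)

lemma snd_borel[measurable]: "snd \<in> borel_measurable (borel :: (real \<times> real) measure)"
  using measurable_snd[of "borel :: real measure" "borel :: real measure"] by (simp add: borel_prod)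

lemma costf_diag[simp]: "costf (x, x) = 0"
  by (simp add: costf_def)

lemma Tc_le: "P \<in> couplings \<mu> \<nu> \<Longrightarrow> Tc \<mu> \<nu> \<le> (\<integral>\<^sup>+p. costf p \<partial>P)"
  unfolding Tc_def costf_def by (rule INF_lower)

lemma diag_coupling:
  assumes "prob_space M" "sets M = sets borel"
  shows "distr M borel (\<lambda>x. (x, x)) \<in> couplings M M"
    and "(\<integral>\<^sup>+p. costf p \<partial>distr M borel (\<lambda>x. (x, x))) = 0"
proof -
  have [measurable]: "(\<lambda>x. (x, x)) \<in> M \<rightarrow>\<^sub>M borel"
    using assms(2) by (simp add: measurable_cong_sets[OF assms(2) refl])
  have id: "distr M borel (\<lambda>x. x) = M" by (rule distr_id2) (simp add: assms)
  have "distr (distr M borel (\<lambda>x. (x, x))) borel fst = distr M borel (fst \<circ> (\<lambda>x. (x, x)))"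
    by (rule distr_distr) auto
  also have "\<dots> = M" using id by (simp add: comp_def)
  finally have 1: "distr (distr M borel (\<lambda>x. (x, x))) borel fst = M" .
  have "distr (distr M borel (\<lambda>x. (x, x))) borel snd = distr M borel (snd \<circ> (\<lambda>x. (x, x)))"
    by (rule distr_distr) auto
  also have "\<dots> = M" using id by (simp add: comp_def)
  finally have 2: "distr (distr M borel (\<lambda>x. (x, x))) borel snd = M" .
  show "distr M borel (\<lambda>x. (x, x)) \<in> couplings M M"
    unfolding couplings_def using assms 1 2
    by (auto intro!: prob_space.prob_space_distr)
  show "(\<integral>\<^sup>+p. costf p \<partial>distr M borel (\<lambda>x. (x, x))) = 0"
    by (subst nn_integral_distr) auto
qed



lemma ennreal_half: "0 \<le> a \<Longrightarrow> ennreal (a / 2) = ennreal (1/2) * ennreal a"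
  by (subst ennreal_mult[symmetric]) auto

lemma max_coupling:
  fixes f g m \<rho> :: "real \<Rightarrow> real" and qr c :: real
  assumes [measurable]: "f \<in> borel_measurable borel" "g \<in> borel_measurable borel"
    and f0: "\<And>x. 0 \<le> f x" and g0: "\<And>x. 0 \<le> g x"
    and m_def: "\<And>x. m x = min (f x) (g x)"
    and qpos: "0 < qr"
    and nnf: "(\<integral>\<^sup>+x. ennreal (f x - m x) \<partial>lborel) = ennreal qr"
    and nng: "(\<integral>\<^sup>+x. ennreal (g x - m x) \<partial>lborel) = ennreal qr"
    and f1: "(\<integral>\<^sup>+x. ennreal (f x) \<partial>lborel) = 1"
    and \<rho>_def: "\<And>v. \<rho> v = (g v - m v) / qr"
  shows "Tc (density lborel (\<lambda>x. ennreal (f x))) (density lborel (\<lambda>x. ennreal (g x)))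
     \<le> (\<integral>\<^sup>+x. ennreal ((1/2 + \<bar>x - c\<bar>) * \<bar>g x - f x\<bar>) \<partial>lborel)"
proof -
  have m_eq: "m = (\<lambda>x. min (f x) (g x))" using m_def by auto
  have [measurable]: "m \<in> borel_measurable borel" unfolding m_eq by measurable
  have \<rho>_eq: "\<rho> = (\<lambda>v. (g v - m v) / qr)" using \<rho>_def by auto
  have [measurable]: "\<rho> \<in> borel_measurable borel" unfolding \<rho>_eq by measurable
  have m0: "0 \<le> m x" "m x \<le> f x" "m x \<le> g x" for x using f0 g0 by (auto simp: m_def)
  have \<rho>0: "0 \<le> \<rho> v" for v using m0 qpos by (simp add: \<rho>_def)
  define B where "B = ((lborel::real measure) \<Otimes>\<^sub>M (lborel::real measure)) \<Otimes>\<^sub>M count_space (UNIV :: bool set)"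
  define H where "H \<omega> = ennreal (if snd \<omega> then m (fst (fst \<omega>)) * \<rho> (snd (fst \<omega>))
      else (f (fst (fst \<omega>)) - m (fst (fst \<omega>))) * \<rho> (snd (fst \<omega>)))" for \<omega> :: "(real \<times> real) \<times> bool"
  define F where "F \<omega> = (if snd \<omega> then (fst (fst \<omega>), fst (fst \<omega>)) else fst \<omega>)" for \<omega> :: "(real \<times> real) \<times> bool"
  define \<Omega> where "\<Omega> = density B H"
  have [measurable]: "H \<in> borel_measurable B" unfolding H_def B_def by measurable
  have F_meas0: "F \<in> B \<rightarrow>\<^sub>M (borel \<Otimes>\<^sub>M borel)" unfolding F_def B_def by measurable
  have F_meas[measurable]: "F \<in> B \<rightarrow>\<^sub>M borel" using F_meas0 by (simp add: borel_prod)
  have sets\<Omega>: "sets \<Omega> = sets B" by (simp add: \<Omega>_def)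
  have F_meas'[measurable]: "F \<in> \<Omega> \<rightarrow>\<^sub>M borel" using F_meas by (simp add: measurable_cong_sets[OF sets\<Omega> refl])
  interpret BB: pair_sigma_finite "(lborel::real measure) \<Otimes>\<^sub>M (lborel::real measure)" "count_space (UNIV :: bool set)"
    by (intro pair_sigma_finite.intro sigma_finite_pair_measure sigma_finite_measure_count_space_countable)
       (auto intro: lborel.sigma_finite_measure_axioms)
  have sfc: "sigma_finite_measure (count_space (UNIV::bool set))"
    by (rule sigma_finite_measure_count_space_countable) simp
  have K: "(\<integral>\<^sup>+\<omega>. h (F \<omega>) \<partial>\<Omega>) = (\<integral>\<^sup>+x. \<integral>\<^sup>+v. ennreal (m x * \<rho> v) * h (x, x) + ennreal ((f x - m x) * \<rho> v) * h (x, v) \<partial>lborel \<partial>lborel)"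
    if h[measurable]: "h \<in> borel_measurable borel" for h :: "real \<times> real \<Rightarrow> ennreal"
  proof -
    have [measurable]: "h \<in> borel_measurable (borel \<Otimes>\<^sub>M borel)" using h by (simp add: borel_prod)
    have "(\<integral>\<^sup>+\<omega>. h (F \<omega>) \<partial>\<Omega>) = (\<integral>\<^sup>+\<omega>. H \<omega> * h (F \<omega>) \<partial>B)"
      unfolding \<Omega>_def by (rule nn_integral_density) measurable
    also have "\<dots> = (\<integral>\<^sup>+a. \<integral>\<^sup>+b. H (a, b) * h (F (a, b)) \<partial>count_space UNIV \<partial>(lborel \<Otimes>\<^sub>M lborel))"
      unfolding B_def by (rule sigma_finite_measure.nn_integral_fst[OF sfc, symmetric]) (fold B_def, measurable)
    also have "\<dots> = (\<integral>\<^sup>+a. ennreal (m (fst a) * \<rho> (snd a)) * h (fst a, fst a) + ennreal ((f (fst a) - m (fst a)) * \<rho> (snd a)) * h a \<partial>(lborel \<Otimes>\<^sub>M lborel))"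
      by (intro nn_integral_cong) (simp add: nn_integral_count_space_finite UNIV_bool H_def F_def add.commute)
    also have "\<dots> = (\<integral>\<^sup>+x. \<integral>\<^sup>+v. (\<lambda>a. ennreal (m (fst a) * \<rho> (snd a)) * h (fst a, fst a) + ennreal ((f (fst a) - m (fst a)) * \<rho> (snd a)) * h a) (x, v) \<partial>lborel \<partial>lborel)"
      by (rule sigma_finite_measure.nn_integral_fst[OF lborel.sigma_finite_measure_axioms, symmetric]) measurable
    also have "\<dots> = (\<integral>\<^sup>+x. \<integral>\<^sup>+v. ennreal (m x * \<rho> v) * h (x, x) + ennreal ((f x - m x) * \<rho> v) * h (x, v) \<partial>lborel \<partial>lborel)"
      by simp
    finally show ?thesis .
  qed
  define P where "P = distr \<Omega> borel F"
  have emd: "emeasure (distr \<Omega> borel G) A = (\<integral>\<^sup>+\<omega>. indicator A (G \<omega>) \<partial>\<Omega>)"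
    if G[measurable]: "G \<in> \<Omega> \<rightarrow>\<^sub>M borel" and A: "A \<in> sets borel" for G :: "_ \<Rightarrow> 'b::topological_space" and A
  proof -
    have "emeasure (distr \<Omega> borel G) A = emeasure \<Omega> (G -` A \<inter> space \<Omega>)"
      by (rule emeasure_distr[OF G A])
    also have "\<dots> = (\<integral>\<^sup>+\<omega>. indicator (G -` A \<inter> space \<Omega>) \<omega> \<partial>\<Omega>)"
      by (rule nn_integral_indicator[symmetric]) (use G A in measurable)
    also have "\<dots> = (\<integral>\<^sup>+\<omega>. indicator A (G \<omega>) \<partial>\<Omega>)"
      by (intro nn_integral_cong) (auto simp: indicator_def)
    finally show ?thesis .
  qed
  have int\<rho>h: "(\<integral>\<^sup>+v. ennreal (\<rho> v) * h v \<partial>lborel) = ennreal (1/qr) * (\<integral>\<^sup>+v. ennreal (g v - m v) * h v \<partial>lborel)"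
    if [measurable]: "h \<in> borel_measurable borel" for h
  proof -
    have "(\<integral>\<^sup>+v. ennreal (\<rho> v) * h v \<partial>lborel) = (\<integral>\<^sup>+v. ennreal (1/qr) * (ennreal (g v - m v) * h v) \<partial>lborel)"
    proof (intro nn_integral_cong)
      fix v :: real
      have "ennreal (1/qr) * ennreal (g v - m v) = ennreal (1/qr * (g v - m v))"
        using qpos m0 by (intro ennreal_mult[symmetric]) auto
      also have "1/qr * (g v - m v) = \<rho> v" by (simp add: \<rho>_def)
      finally show "ennreal (\<rho> v) * h v = ennreal (1/qr) * (ennreal (g v - m v) * h v)"
        by (metis mult.assoc)
    qed
    also have "\<dots> = ennreal (1/qr) * (\<integral>\<^sup>+v. ennreal (g v - m v) * h v \<partial>lborel)"
      by (rule nn_integral_cmult) measurable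
    finally show ?thesis .
  qed
  have int\<rho>: "(\<integral>\<^sup>+v. ennreal (\<rho> v) \<partial>lborel) = 1"
    using int\<rho>h[of "\<lambda>_. 1"] qpos by (simp add: nng ennreal_mult[symmetric])
  have fstF: "distr P borel fst = distr \<Omega> borel (fst \<circ> F)"
    unfolding P_def by (rule distr_distr) measurable
  have sndF: "distr P borel snd = distr \<Omega> borel (snd \<circ> F)"
    unfolding P_def by (rule distr_distr) measurable
  have marg1: "distr P borel fst = density lborel (\<lambda>x. ennreal (f x))"
  proof (rule measure_eqI)
    show "sets (distr P borel fst) = sets (density lborel (\<lambda>x. ennreal (f x)))" by simp
    fix A assume "A \<in> sets (distr P borel fst)"
    then have A[measurable]: "A \<in> sets borel" by simp
    have "emeasure (distr P borel fst) A = (\<integral>\<^sup>+\<omega>. (\<lambda>p. indicator A (fst p)) (F \<omega>) \<partial>\<Omega>)"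
      unfolding fstF by (subst emd) (auto simp: comp_def)
    also have "\<dots> = (\<integral>\<^sup>+x. \<integral>\<^sup>+v. ennreal (m x * \<rho> v) * indicator A x + ennreal ((f x - m x) * \<rho> v) * indicator A x \<partial>lborel \<partial>lborel)"
      by (subst K) auto
    also have "\<dots> = (\<integral>\<^sup>+x. \<integral>\<^sup>+v. ennreal (f x * indicator A x) * ennreal (\<rho> v) \<partial>lborel \<partial>lborel)"
    proof (intro nn_integral_cong)
      fix x v :: real
      have "ennreal (m x * \<rho> v) + ennreal ((f x - m x) * \<rho> v) = ennreal (m x * \<rho> v + (f x - m x) * \<rho> v)"
        using m0 \<rho>0 by (intro ennreal_plus[symmetric]) auto
      also have "\<dots> = ennreal (f x) * ennreal (\<rho> v)" using f0 \<rho>0 by (simp add: algebra_simps ennreal_mult[symmetric])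
      finally show "ennreal (m x * \<rho> v) * indicator A x + ennreal ((f x - m x) * \<rho> v) * indicator A x = ennreal (f x * indicator A x) * ennreal (\<rho> v)"
        by (auto simp: indicator_def)
    qed
    also have "\<dots> = (\<integral>\<^sup>+x. ennreal (f x * indicator A x) * (\<integral>\<^sup>+v. ennreal (\<rho> v) \<partial>lborel) \<partial>lborel)"
      by (intro nn_integral_cong nn_integral_cmult) measurable
    also have "\<dots> = (\<integral>\<^sup>+x. ennreal (f x) * indicator A x \<partial>lborel)"
      unfolding int\<rho> by (intro nn_integral_cong) (auto simp: indicator_def)
    also have "\<dots> = emeasure (density lborel (\<lambda>x. ennreal (f x))) A"
      by (rule emeasure_density[symmetric]) auto
    finally show "emeasure (distr P borel fst) A = emeasure (density lborel (\<lambda>x. ennreal (f x))) A" .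
  qed
  have marg2: "distr P borel snd = density lborel (\<lambda>x. ennreal (g x))"
  proof (rule measure_eqI)
    show "sets (distr P borel snd) = sets (density lborel (\<lambda>x. ennreal (g x)))" by simp
    fix A assume "A \<in> sets (distr P borel snd)"
    then have A[measurable]: "A \<in> sets borel" by simp
    define RA where "RA = (\<integral>\<^sup>+v. ennreal (\<rho> v) * indicator A v \<partial>lborel)"
    have "emeasure (distr P borel snd) A = (\<integral>\<^sup>+\<omega>. (\<lambda>p. indicator A (snd p)) (F \<omega>) \<partial>\<Omega>)"
      unfolding sndF by (subst emd) (auto simp: comp_def)
    also have "\<dots> = (\<integral>\<^sup>+x. \<integral>\<^sup>+v. ennreal (m x * \<rho> v) * indicator A x + ennreal ((f x - m x) * \<rho> v) * indicator A v \<partial>lborel \<partial>lborel)"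
      by (subst K) auto
    also have "\<dots> = (\<integral>\<^sup>+x. ennreal (m x) * indicator A x + ennreal (f x - m x) * RA \<partial>lborel)"
    proof (intro nn_integral_cong)
      fix x :: real
      have "(\<integral>\<^sup>+v. ennreal (m x * \<rho> v) * indicator A x + ennreal ((f x - m x) * \<rho> v) * indicator A v \<partial>lborel)
         = (\<integral>\<^sup>+v. (ennreal (m x) * indicator A x) * ennreal (\<rho> v) + ennreal (f x - m x) * (ennreal (\<rho> v) * indicator A v) \<partial>lborel)"
        using m0 \<rho>0 by (intro nn_integral_cong) (simp add: ennreal_mult mult_ac)
      also have "\<dots> = (\<integral>\<^sup>+v. (ennreal (m x) * indicator A x) * ennreal (\<rho> v) \<partial>lborel) + (\<integral>\<^sup>+v. ennreal (f x - m x) * (ennreal (\<rho> v) * indicator A v) \<partial>lborel)"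
        by (rule nn_integral_add) measurable
      also have "\<dots> = ennreal (m x) * indicator A x + ennreal (f x - m x) * RA"
        unfolding RA_def by (simp add: nn_integral_cmult int\<rho>)
      finally show "(\<integral>\<^sup>+v. ennreal (m x * \<rho> v) * indicator A x + ennreal ((f x - m x) * \<rho> v) * indicator A v \<partial>lborel)
         = ennreal (m x) * indicator A x + ennreal (f x - m x) * RA" .
    qed
    also have "\<dots> = (\<integral>\<^sup>+x. ennreal (m x) * indicator A x \<partial>lborel) + (\<integral>\<^sup>+x. ennreal (f x - m x) \<partial>lborel) * RA"
      by (subst nn_integral_add) (auto simp: nn_integral_multc)
    also have "(\<integral>\<^sup>+x. ennreal (f x - m x) \<partial>lborel) * RA = (\<integral>\<^sup>+v. ennreal (g v - m v) * indicator A v \<partial>lborel)"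
    proof -
      have "(\<integral>\<^sup>+x. ennreal (f x - m x) \<partial>lborel) * RA = ennreal qr * ennreal (1/qr) * (\<integral>\<^sup>+v. ennreal (g v - m v) * indicator A v \<partial>lborel)"
        unfolding nnf RA_def by (subst int\<rho>h) (auto simp: mult.assoc)
      also have "ennreal qr * ennreal (1/qr) = 1" using qpos by (simp add: ennreal_mult[symmetric])
      finally show ?thesis by simp
    qed
    also have "(\<integral>\<^sup>+x. ennreal (m x) * indicator A x \<partial>lborel) + (\<integral>\<^sup>+v. ennreal (g v - m v) * indicator A v \<partial>lborel)
       = (\<integral>\<^sup>+x. ennreal (m x) * indicator A x + ennreal (g x - m x) * indicator A x \<partial>lborel)"
      by (rule nn_integral_add[symmetric]) measurable
    also have "\<dots> = (\<integral>\<^sup>+x. ennreal (g x) * indicator A x \<partial>lborel)"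
    proof (intro nn_integral_cong)
      fix x :: real
      have "ennreal (m x) + ennreal (g x - m x) = ennreal (g x)"
        using m0 by (subst ennreal_plus[symmetric]) auto
      then show "ennreal (m x) * indicator A x + ennreal (g x - m x) * indicator A x = ennreal (g x) * indicator A x"
        by (auto simp: indicator_def)
    qed
    also have "\<dots> = emeasure (density lborel (\<lambda>x. ennreal (g x))) A"
      by (rule emeasure_density[symmetric]) auto
    finally show "emeasure (distr P borel snd) A = emeasure (density lborel (\<lambda>x. ennreal (g x))) A" .
  qed
  have probP: "prob_space P"
  proof (rule prob_spaceI)
    have "emeasure P (space P) = emeasure (distr P borel fst) UNIV"
      by (subst emeasure_distr) (auto simp: P_def)
    also have "\<dots> = 1" unfolding marg1 by (subst emeasure_density) (auto simp: f1)
    finally show "emeasure P (space P) = 1" .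
  qed
  have coup: "P \<in> couplings (density lborel (\<lambda>x. ennreal (f x))) (density lborel (\<lambda>x. ennreal (g x)))"
    unfolding couplings_def using probP marg1 marg2 by (simp add: P_def)
  define T where "T = (\<integral>\<^sup>+v. ennreal (\<rho> v) * ennreal \<bar>v - c\<bar> \<partial>lborel)"
  have cost1: "(\<integral>\<^sup>+p. costf p \<partial>P) \<le> (\<integral>\<^sup>+x. ennreal ((f x - m x)*(1+\<bar>x-c\<bar>)) + ennreal (f x - m x) * T \<partial>lborel)"
  proof -
    have "(\<integral>\<^sup>+p. costf p \<partial>P) = (\<integral>\<^sup>+\<omega>. costf (F \<omega>) \<partial>\<Omega>)"
      unfolding P_def by (rule nn_integral_distr) measurable
    also have "\<dots> = (\<integral>\<^sup>+x. \<integral>\<^sup>+v. ennreal (m x * \<rho> v) * costf (x, x) + ennreal ((f x - m x) * \<rho> v) * costf (x, v) \<partial>lborel \<partial>lborel)"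
      by (rule K) measurable
    also have "\<dots> \<le> (\<integral>\<^sup>+x. \<integral>\<^sup>+v. ennreal ((f x - m x)*(1+\<bar>x-c\<bar>)) * ennreal (\<rho> v) + ennreal (f x - m x) * (ennreal (\<rho> v) * ennreal \<bar>v - c\<bar>) \<partial>lborel \<partial>lborel)"
    proof (intro nn_integral_mono)
      fix x v :: real
      have cb: "costf (x, v) \<le> ennreal (1 + \<bar>x - c\<bar> + \<bar>v - c\<bar>)"
        unfolding costf_def by (intro ennreal_leI) auto
      have "ennreal ((f x - m x) * \<rho> v) * costf (x, v) \<le> ennreal ((f x - m x) * \<rho> v) * ennreal (1 + \<bar>x - c\<bar> + \<bar>v - c\<bar>)"
        by (rule mult_left_mono[OF cb]) simp
      also have "\<dots> = ennreal ((f x - m x) * \<rho> v * (1 + \<bar>x - c\<bar> + \<bar>v - c\<bar>))"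
        using m0 \<rho>0 by (intro ennreal_mult[symmetric]) auto
      also have "(f x - m x) * \<rho> v * (1 + \<bar>x - c\<bar> + \<bar>v - c\<bar>) = (f x - m x)*(1+\<bar>x-c\<bar>) * \<rho> v + (f x - m x) * (\<rho> v * \<bar>v - c\<bar>)"
        by (simp add: algebra_simps)
      also have "ennreal \<dots> = ennreal ((f x - m x)*(1+\<bar>x-c\<bar>)) * ennreal (\<rho> v) + ennreal (f x - m x) * (ennreal (\<rho> v) * ennreal \<bar>v - c\<bar>)"
        using m0 \<rho>0 by (simp add: ennreal_plus ennreal_mult)
      finally show "ennreal (m x * \<rho> v) * costf (x, x) + ennreal ((f x - m x) * \<rho> v) * costf (x, v) \<le> \<dots>" by simp
    qed
    also have "\<dots> = (\<integral>\<^sup>+x. ennreal ((f x - m x)*(1+\<bar>x-c\<bar>)) + ennreal (f x - m x) * T \<partial>lborel)"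
    proof (intro nn_integral_cong)
      fix x :: real
      show "(\<integral>\<^sup>+v. ennreal ((f x - m x)*(1+\<bar>x-c\<bar>)) * ennreal (\<rho> v) + ennreal (f x - m x) * (ennreal (\<rho> v) * ennreal \<bar>v - c\<bar>) \<partial>lborel)
          = ennreal ((f x - m x)*(1+\<bar>x-c\<bar>)) + ennreal (f x - m x) * T"
        unfolding T_def by (subst nn_integral_add) (auto simp: nn_integral_cmult int\<rho>)
    qed
    finally show ?thesis .
  qed
  have qT: "ennreal qr * T = (\<integral>\<^sup>+x. ennreal (g x - m x) * ennreal \<bar>x - c\<bar> \<partial>lborel)"
  proof -
    have "ennreal qr * T = ennreal qr * ennreal (1/qr) * (\<integral>\<^sup>+x. ennreal (g x - m x) * ennreal \<bar>x - c\<bar> \<partial>lborel)"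
      unfolding T_def by (subst int\<rho>h) (auto simp: mult.assoc)
    also have "ennreal qr * ennreal (1/qr) = 1" using qpos by (simp add: ennreal_mult[symmetric])
    finally show ?thesis by simp
  qed
  have half: "(\<integral>\<^sup>+x. ennreal ((f x - m x) / 2) \<partial>lborel) = ennreal (qr/2)"
    "(\<integral>\<^sup>+x. ennreal ((g x - m x) / 2) \<partial>lborel) = ennreal (qr/2)"
  proof -
    have "(\<integral>\<^sup>+x. ennreal ((f x - m x) / 2) \<partial>lborel) = (\<integral>\<^sup>+x. ennreal (1/2) * ennreal (f x - m x) \<partial>lborel)"
      using m0 by (intro nn_integral_cong ennreal_half) auto
    also have "\<dots> = ennreal (1/2) * ennreal qr" by (subst nn_integral_cmult) (auto simp: nnf)
    finally show "(\<integral>\<^sup>+x. ennreal ((f x - m x) / 2) \<partial>lborel) = ennreal (qr/2)" using qpos ennreal_half[of qr] by simp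
    have "(\<integral>\<^sup>+x. ennreal ((g x - m x) / 2) \<partial>lborel) = (\<integral>\<^sup>+x. ennreal (1/2) * ennreal (g x - m x) \<partial>lborel)"
      using m0 by (intro nn_integral_cong ennreal_half) auto
    also have "\<dots> = ennreal (1/2) * ennreal qr" by (subst nn_integral_cmult) (auto simp: nng)
    finally show "(\<integral>\<^sup>+x. ennreal ((g x - m x) / 2) \<partial>lborel) = ennreal (qr/2)" using qpos ennreal_half[of qr] by simp
  qed
  define X' where "X' = (\<integral>\<^sup>+x. ennreal ((f x - m x)*(1/2+\<bar>x-c\<bar>)) \<partial>lborel)"
  define Y where "Y = (\<integral>\<^sup>+x. ennreal (g x - m x) * ennreal \<bar>x - c\<bar> \<partial>lborel)"
  have "(\<integral>\<^sup>+x. ennreal ((f x - m x)*(1+\<bar>x-c\<bar>)) + ennreal (f x - m x) * T \<partial>lborel)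
      = (\<integral>\<^sup>+x. ennreal ((f x - m x)*(1+\<bar>x-c\<bar>)) \<partial>lborel) + ennreal qr * T"
    by (subst nn_integral_add) (auto simp: nn_integral_multc nnf)
  also have "(\<integral>\<^sup>+x. ennreal ((f x - m x)*(1+\<bar>x-c\<bar>)) \<partial>lborel) = X' + ennreal (qr/2)"
  proof -
    have "(\<integral>\<^sup>+x. ennreal ((f x - m x)*(1+\<bar>x-c\<bar>)) \<partial>lborel) = (\<integral>\<^sup>+x. ennreal ((f x - m x)*(1/2+\<bar>x-c\<bar>)) + ennreal ((f x - m x) / 2) \<partial>lborel)"
    proof (intro nn_integral_cong)
      fix x :: real
      have e: "(f x - m x)*(1+\<bar>x-c\<bar>) = (f x - m x)*(1/2+\<bar>x-c\<bar>) + (f x - m x) / 2" by (simp add: algebra_simps)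
      show "ennreal ((f x - m x)*(1+\<bar>x-c\<bar>)) = ennreal ((f x - m x)*(1/2+\<bar>x-c\<bar>)) + ennreal ((f x - m x) / 2)"
        unfolding e using m0[of x] by (intro ennreal_plus) auto
    qed
    also have "\<dots> = X' + ennreal (qr/2)" unfolding X'_def half(1)[symmetric] by (rule nn_integral_add) auto
    finally show ?thesis .
  qed
  also have "X' + ennreal (qr/2) + ennreal qr * T = (\<integral>\<^sup>+x. ennreal ((1/2 + \<bar>x - c\<bar>) * \<bar>g x - f x\<bar>) \<partial>lborel)"
  proof -
    have "(\<integral>\<^sup>+x. ennreal ((1/2 + \<bar>x - c\<bar>) * \<bar>g x - f x\<bar>) \<partial>lborel) =
       (\<integral>\<^sup>+x. ennreal ((f x - m x)*(1/2+\<bar>x-c\<bar>)) + (ennreal (g x - m x) * ennreal \<bar>x - c\<bar> + ennreal ((g x - m x) / 2)) \<partial>lborel)"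
    proof (intro nn_integral_cong)
      fix x :: real
      have e: "(1/2 + \<bar>x - c\<bar>) * \<bar>g x - f x\<bar> = (f x - m x)*(1/2+\<bar>x-c\<bar>) + ((g x - m x) * \<bar>x - c\<bar> + (g x - m x) / 2)"
        by (simp add: m_def min_def abs_if field_simps)
      show "ennreal ((1/2 + \<bar>x - c\<bar>) * \<bar>g x - f x\<bar>) = ennreal ((f x - m x)*(1/2+\<bar>x-c\<bar>)) + (ennreal (g x - m x) * ennreal \<bar>x - c\<bar> + ennreal ((g x - m x) / 2))"
        unfolding e using m0 by (simp add: ennreal_plus ennreal_mult)
    qed
    also have "\<dots> = X' + (Y + ennreal (qr/2))"
      unfolding X'_def Y_def half(2)[symmetric]
      by (subst nn_integral_add, measurable, subst nn_integral_add, measurable)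
    finally show ?thesis using qT by (simp add: Y_def add_ac)
  qed
  finally have cost: "(\<integral>\<^sup>+p. costf p \<partial>P) \<le> (\<integral>\<^sup>+x. ennreal ((1/2 + \<bar>x - c\<bar>) * \<bar>g x - f x\<bar>) \<partial>lborel)"
    using cost1 by simp
  show ?thesis using Tc_le[OF coup] cost by (rule order_trans)
qed



lemma Tc_le_W:
  fixes f g :: "real \<Rightarrow> real" and c :: real
  assumes [measurable]: "f \<in> borel_measurable borel" "g \<in> borel_measurable borel"
    and f0: "\<And>x. 0 \<le> f x" and g0: "\<And>x. 0 \<le> g x"
    and fi: "integrable lborel f" and gi: "integrable lborel g"
    and f1: "integral\<^sup>L lborel f = 1" and g1: "integral\<^sup>L lborel g = 1"
  shows "Tc (density lborel (\<lambda>x. ennreal (f x))) (density lborel (\<lambda>x. ennreal (g x)))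
     \<le> (\<integral>\<^sup>+x. ennreal ((1/2 + \<bar>x - c\<bar>) * \<bar>g x - f x\<bar>) \<partial>lborel)"
proof -
  define m where "m x = min (f x) (g x)" for x
  have [measurable]: "m \<in> borel_measurable borel" unfolding m_def by measurable
  have m0: "0 \<le> m x" "m x \<le> f x" "m x \<le> g x" for x using f0 g0 by (auto simp: m_def)
  have mi: "integrable lborel m"
    by (rule Bochner_Integration.integrable_bound[OF fi]) (use m0 f0 in \<open>auto intro!: AE_I2 simp: order_trans[OF _ abs_ge_self]\<close>)
  have fmi: "integrable lborel (\<lambda>x. f x - m x)" using fi mi by auto
  have gmi: "integrable lborel (\<lambda>x. g x - m x)" using gi mi by auto
  define qr where "qr = integral\<^sup>L lborel (\<lambda>x. g x - m x)"
  have qf: "integral\<^sup>L lborel (\<lambda>x. f x - m x) = qr"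
    unfolding qr_def using fi gi mi f1 g1 by (simp add: integral_diff)
  have q0: "0 \<le> qr" unfolding qr_def using m0 by (intro integral_nonneg_AE AE_I2) auto
  have nnf: "(\<integral>\<^sup>+x. ennreal (f x - m x) \<partial>lborel) = ennreal qr"
    using nn_integral_eq_integral[OF fmi] m0 qf by simp
  have nng: "(\<integral>\<^sup>+x. ennreal (g x - m x) \<partial>lborel) = ennreal qr"
    using nn_integral_eq_integral[OF gmi] m0 qr_def by simp
  have f1': "(\<integral>\<^sup>+x. ennreal (f x) \<partial>lborel) = 1"
    using nn_integral_eq_integral[OF fi] f0 f1 by simp
  show ?thesis
  proof (cases "qr = 0")
    case True
    have "AE x in lborel. g x - m x = 0"
      using integral_nonneg_eq_0_iff_AE[OF gmi] m0 True qr_def by simp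
    moreover have "AE x in lborel. f x - m x = 0"
      using integral_nonneg_eq_0_iff_AE[OF fmi] m0 True qf by simp
    ultimately have "AE x in lborel. ennreal (f x) = ennreal (g x)" by eventually_elim simp
    then have eq: "density lborel (\<lambda>x. ennreal (f x)) = density lborel (\<lambda>x. ennreal (g x))"
      by (intro density_cong) auto
    define M where "M = density lborel (\<lambda>x. ennreal (f x))"
    have pM: "prob_space M"
      by (rule prob_spaceI) (simp add: M_def emeasure_density f1')
    have sM: "sets M = sets borel" by (simp add: M_def)
    have "Tc M M \<le> 0"
      using Tc_le[OF diag_coupling(1)[OF pM sM]] diag_coupling(2)[OF pM sM] by simp
    then show ?thesis using eq M_def by (metis order_trans zero_le)
  next
    case False
    then have qpos: "0 < qr" using q0 by simp
    show ?thesis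
      by (rule max_coupling[where m=m and qr=qr and \<rho>="\<lambda>v. (g v - m v) / qr"])
         (use f0 g0 qpos nnf nng f1' in \<open>auto simp: m_def\<close>)
  qed
qed



lemma p0_bounds: "0 < p0" "p0 \<le> 41/100"
proof -
  show "0 < p0" by simp
  have "(100/41)\<^sup>2 \<le> 2 * pi" using pi_gt3 by (simp add: power2_eq_square)
  then have "100/41 \<le> sqrt (2*pi)" by (rule real_le_rsqrt)
  then show "p0 \<le> 41/100" by (simp add: field_simps)
qed

lemma Tc_linear:
  fixes s t \<sigma> :: real
  assumes sg: "1 \<le> \<sigma>"
  shows "Tc (density lborel (\<lambda>x. ennreal (normal_density s 1 x))) (density lborel (\<lambda>x. ennreal (normal_density t \<sigma> x)))
    \<le> ennreal (1 + \<bar>s - t\<bar> + (\<sigma> - 1) * (2 * p0))"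
proof -
  define M where "M = density lborel (\<lambda>x. ennreal (normal_density s 1 x))"
  define T where "T = (\<lambda>y::real. (t - \<sigma> * s) + \<sigma> * y)"
  have pM: "prob_space M" unfolding M_def by (rule prob_space_normal_density) simp
  have sM: "sets M = sets borel" by (simp add: M_def)
  have [measurable]: "T \<in> borel_measurable borel" unfolding T_def by measurable
  have Tm[measurable]: "T \<in> M \<rightarrow>\<^sub>M borel" by (simp add: measurable_cong_sets[OF sM refl])
  have Gm[measurable]: "(\<lambda>x. (x, T x)) \<in> M \<rightarrow>\<^sub>M borel"
  proof -
    have "(\<lambda>x. (x, T x)) \<in> borel \<rightarrow>\<^sub>M (borel \<Otimes>\<^sub>M borel)" by measurable
    then show ?thesis by (simp add: measurable_cong_sets[OF sM refl] borel_prod)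
  qed
  define P where "P = distr M borel (\<lambda>x. (x, T x))"
  have id: "distr M borel (\<lambda>x. x) = M" by (rule distr_id2) (simp add: sM)
  have dist0: "distributed M lborel (\<lambda>x. x) (\<lambda>x. ennreal (normal_density s 1 x))"
    unfolding distributed_def
  proof (intro conjI)
    show "distr M lborel (\<lambda>x. x) = density lborel (\<lambda>x. ennreal (normal_density s 1 x))"
      unfolding M_def by (rule distr_id2) simp
  qed (auto simp: M_def)
  have "distributed M lborel (\<lambda>x. (t - \<sigma> * s) + \<sigma> * x) (\<lambda>x. ennreal (normal_density ((t - \<sigma> * s) + \<sigma> * s) (\<bar>\<sigma>\<bar> * 1) x))"
    using sg by (intro prob_space.normal_density_affine[OF pM dist0]) auto
  then have "distr M lborel T = density lborel (\<lambda>x. ennreal (normal_density t \<sigma> x))"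
    using sg unfolding distributed_def T_def by simp
  then have dT: "distr M borel T = density lborel (\<lambda>x. ennreal (normal_density t \<sigma> x))"
    by (metis distr_cong sets_lborel)
  have m1: "distr P borel fst = M"
  proof -
    have "distr P borel fst = distr M borel (fst \<circ> (\<lambda>x. (x, T x)))" unfolding P_def by (rule distr_distr) measurable
    then show ?thesis using id by (simp add: comp_def)
  qed
  have m2: "distr P borel snd = density lborel (\<lambda>x. ennreal (normal_density t \<sigma> x))"
  proof -
    have "distr P borel snd = distr M borel (snd \<circ> (\<lambda>x. (x, T x)))" unfolding P_def by (rule distr_distr) measurable
    then show ?thesis using dT by (simp add: comp_def)
  qed
  have coup: "P \<in> couplings M (density lborel (\<lambda>x. ennreal (normal_density t \<sigma> x)))"
    unfolding couplings_def using m1 m2 pM by (auto simp: P_def intro!: prob_space.prob_space_distr)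
  let ?d = "\<bar>s - t\<bar>"
  have hb: "has_bochner_integral lborel (\<lambda>x. (1 + ?d) * normal_density s 1 x + (\<sigma> - 1) * (normal_density s 1 x * \<bar>x - s\<bar> ^ (2 * 0 + 1)))
      ((1 + ?d) * (fact (2 * 0) / (2^0 * fact 0) * 1 ^ (2 * 0)) + (\<sigma> - 1) * (2 ^ 0 * 1 ^ (2 * 0 + 1) * fact 0 * sqrt (2 / pi)))"
  proof -
    have a: "has_bochner_integral lborel (\<lambda>x. normal_density s 1 x * (x - s) ^ (2 * 0)) (fact (2 * 0) / (2^0 * fact 0) * 1 ^ (2 * 0))"
      using normal_moment_even[of 1 s 0] by simp
    have b: "has_bochner_integral lborel (\<lambda>x. normal_density s 1 x * \<bar>x - s\<bar> ^ (2 * 0 + 1)) (2 ^ 0 * 1 ^ (2 * 0 + 1) * fact 0 * sqrt (2 / pi))"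
      using normal_moment_abs_odd[of 1 s 0] by simp
    show ?thesis using has_bochner_integral_mult_right[OF a, of "1 + ?d"] has_bochner_integral_mult_right[OF b, of "\<sigma> - 1"]
      by (intro has_bochner_integral_add) auto
  qed
  have "(\<integral>\<^sup>+p. costf p \<partial>P) = (\<integral>\<^sup>+x. costf (x, T x) \<partial>M)"
    unfolding P_def by (rule nn_integral_distr) measurable
  also have "\<dots> = (\<integral>\<^sup>+x. ennreal (normal_density s 1 x) * costf (x, T x) \<partial>lborel)"
    unfolding M_def by (rule nn_integral_density) measurable
  also have "\<dots> \<le> (\<integral>\<^sup>+x. ennreal ((1 + ?d) * normal_density s 1 x + (\<sigma> - 1) * (normal_density s 1 x * \<bar>x - s\<bar> ^ (2 * 0 + 1))) \<partial>lborel)"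
  proof (intro nn_integral_mono)
    fix x :: real
    have "\<bar>x - T x\<bar> \<le> ?d + (\<sigma> - 1) * \<bar>x - s\<bar>"
    proof -
      have "x - T x = (s - t) - (\<sigma> - 1) * (x - s)" by (simp add: T_def algebra_simps)
      then show ?thesis using sg abs_triangle_ineq4[of "s - t" "(\<sigma> - 1) * (x - s)"] by (simp add: abs_mult)
    qed
    then have "costf (x, T x) \<le> ennreal (1 + ?d + (\<sigma> - 1) * \<bar>x - s\<bar>)"
      unfolding costf_def by (intro ennreal_leI) auto
    then have "ennreal (normal_density s 1 x) * costf (x, T x) \<le> ennreal (normal_density s 1 x) * ennreal (1 + ?d + (\<sigma> - 1) * \<bar>x - s\<bar>)"
      by (rule mult_left_mono) simp
    also have "\<dots> = ennreal ((1 + ?d) * normal_density s 1 x + (\<sigma> - 1) * (normal_density s 1 x * \<bar>x - s\<bar> ^ (2 * 0 + 1)))"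
    proof -
      have sx: "\<bar>x - s\<bar> \<le> \<sigma> * \<bar>x - s\<bar>" using mult_right_mono[OF sg, of "\<bar>x - s\<bar>"] by simp
      show ?thesis using sg sx by (subst ennreal_mult[symmetric]) (auto simp: algebra_simps)
    qed
    finally show "ennreal (normal_density s 1 x) * costf (x, T x) \<le> \<dots>" .
  qed
  also have "\<dots> = ennreal (integral\<^sup>L lborel (\<lambda>x. (1 + ?d) * normal_density s 1 x + (\<sigma> - 1) * (normal_density s 1 x * \<bar>x - s\<bar> ^ (2 * 0 + 1))))"
    by (rule nn_integral_eq_integral) (use hb sg in \<open>auto intro: integrable.intros\<close>)
  also have "integral\<^sup>L lborel (\<lambda>x. (1 + ?d) * normal_density s 1 x + (\<sigma> - 1) * (normal_density s 1 x * \<bar>x - s\<bar> ^ (2 * 0 + 1)))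
     = 1 + ?d + (\<sigma> - 1) * (2 * p0)"
    using has_bochner_integral_integral_eq[OF hb] by (simp add: sqrt_2pi)
  finally have cost: "(\<integral>\<^sup>+p. costf p \<partial>P) \<le> ennreal (1 + ?d + (\<sigma> - 1) * (2 * p0))" .
  show ?thesis using Tc_le[OF coup] cost unfolding M_def by (rule order_trans)
qed



lemma final_ineq:
  fixes x y p :: real
  assumes x: "0 \<le> x" and y: "0 \<le> y" and xy: "x + y \<le> 1" and p: "0 \<le> p" "p \<le> 41/100"
  shows "(1/2 + x/2)*(2*p*x + 8/3*p*y) + x + 3*p*y \<le> 2 * (x + y)"
proof -
  have e: "(1/2 + x/2)*(2*p*x + 8/3*p*y) + x + 3*p*y = x + p * (x + x*x + 13/3*y + 4/3*(x*y))"
    by (simp add: field_simps)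
  have h1: "x*x \<le> x*(1-y)" using x xy by (intro mult_left_mono) auto
  have h2: "x*y \<le> 1*y" using x y xy by (intro mult_right_mono) auto
  have b: "x + x*x + 13/3*y + 4/3*(x*y) \<le> 2*x + 14/3*y" using h1 h2 by (simp add: algebra_simps)
  have b0: "0 \<le> x + x*x + 13/3*y + 4/3*(x*y)" using x y by simp
  have "p * (x + x*x + 13/3*y + 4/3*(x*y)) \<le> 41/100 * (2*x + 14/3*y)"
    using b b0 p x y by (intro mult_mono) auto
  then show ?thesis unfolding e using x y by simp
qed

theorem lemma2p2:
  fixes s t b :: real
  assumes "b \<ge> 0"
  shows "Tc (gauss s 0) (gauss t b) \<le> ennreal (2 * (\<bar>s - t\<bar> + exp b - 1))"
proof -
  define \<sigma> where "\<sigma> = exp b"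
  define d where "d = \<bar>s - t\<bar>"
  have sg: "1 \<le> \<sigma>" using assms by (simp add: \<sigma>_def)
  have d0: "0 \<le> d" by (simp add: d_def)
  have G: "Tc (gauss s 0) (gauss t b) = Tc (density lborel (\<lambda>x. ennreal (normal_density s 1 x))) (density lborel (\<lambda>x. ennreal (normal_density t \<sigma> x)))"
    by (simp add: gauss_def \<sigma>_def)
  have p: "0 \<le> p0" "p0 \<le> 41/100" using p0_bounds by auto
  show ?thesis
  proof (cases "1 \<le> d + (\<sigma> - 1)")
    case True
    have "Tc (gauss s 0) (gauss t b) \<le> ennreal (1 + d + (\<sigma> - 1) * (2 * p0))"
      unfolding G d_def by (rule Tc_linear[OF sg])
    also have "\<dots> \<le> ennreal (2 * (\<bar>s - t\<bar> + exp b - 1))"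
    proof (intro ennreal_leI)
      have tp: "2 * p0 \<le> 1" using p(2) by linarith
      have "(\<sigma> - 1) * (2 * p0) \<le> (\<sigma> - 1) * 1" using sg by (intro mult_left_mono[OF tp]) simp
      then show "1 + d + (\<sigma> - 1) * (2 * p0) \<le> 2 * (\<bar>s - t\<bar> + exp b - 1)"
        using True by (simp add: d_def \<sigma>_def)
    qed
    finally show ?thesis .
  next
    case False
    have "Tc (gauss s 0) (gauss t b) \<le> (\<integral>\<^sup>+x. ennreal ((1/2 + \<bar>x - t\<bar>) * \<bar>normal_density t \<sigma> x - normal_density s 1 x\<bar>) \<partial>lborel)"
      unfolding G using sg by (intro Tc_le_W) auto
    also have "\<dots> \<le> ennreal ((1/2 + d/2)*(2*p0*d + 8/3*p0*(\<sigma>-1)) + d + 3*p0*(\<sigma>-1))"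
      unfolding d_def by (rule W_bound[OF sg])
    also have "\<dots> \<le> ennreal (2 * (\<bar>s - t\<bar> + exp b - 1))"
    proof (intro ennreal_leI)
      have "(1/2 + d/2)*(2*p0*d + 8/3*p0*(\<sigma>-1)) + d + 3*p0*(\<sigma>-1) \<le> 2 * (d + (\<sigma> - 1))"
        using False sg d0 p by (intro final_ineq) auto
      then show "(1/2 + d/2)*(2*p0*d + 8/3*p0*(\<sigma>-1)) + d + 3*p0*(\<sigma>-1) \<le> 2 * (\<bar>s - t\<bar> + exp b - 1)"
        by (simp add: d_def \<sigma>_def)
    qed
    finally show ?thesis .
  qed
qed

end
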